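(* $\mathtt{RealTime_{IA}}\subseteq\mathtt{pred}$-$\mathtt{dio}$-$\mathtt{ESO}$-$\mathtt{HORN}$: for every iterative array $\mathcal A$ (sequential input, neighborhood $\{-1,0,1\}$, output on the first cell) there is a predecessor Horn formula with diagonal input-output $\Phi$ such that for all $w\in\Sigma^+$, $\mathcal A$ accepts $w$ in real time iff $\langle w\rangle\models\Phi$.
   Context: Fix a finite alphabet $\Sigma$. A nonempty word $w=w_1\cdots w_n$ is represented by the structure $\langle w\rangle=([1,n];(Q_s)_{s\in\Sigma},\mathtt{min},\mathtt{max},\mathtt{suc},\mathtt{pred})$ with $Q_s(i)\iff w_i=s$, $\mathtt{min}(i)\iff i=1$, $\mathtt{max}(i)\iff i=n$, $\mathtt{suc}(i)=\min(i+1,n)$, $\mathtt{pred}(i)=\max(i-1,1)$; $x-k$ denotes $\mathtt{pred}^k(x)$. A predecessor Horn formula with diagonal input-output is $\Phi=\exists\mathbf{R}\forall x\forall y\,\psi(x,y)$, $\mathbf{R}$ a finite set of binary relation symbols, $\psi$ a conjunction of Horn clauses in $x,y$ over $\{(Q_s)_{s\in\Sigma},\mathtt{min},\mathtt{max},\mathtt{suc},\mathtt{pred},=\}\cup\mathbf{R}$, each of the form $\delta_1\wedge\cdots\wedge\delta_r\to\delta_0$ with $\delta_0$ an atom $R(x,y)$ ($R\in\mathbf{R}$) or $\bot$, each hypothesis being one of: $Q_s(x-a)\wedge x=y$ ($s\in\Sigma$, $a\ge0$); $U(x-a)$, $\neg U(x-a)$, $U(y-a)$, $\neg U(y-a)$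 ($U\in\{\mathtt{min},\mathtt{max}\}$, $a\ge0$); $S(x-a,y-b)$ or $S(y-b,x-a)$ ($S\in\mathbf{R}$, $a,b\ge0$). $\mathtt{pred}$-$\mathtt{dio}$-$\mathtt{ESO}$-$\mathtt{HORN}$ is the class of languages $\{w\in\Sigma^+:\langle w\rangle\models\Phi\}$. An iterative array is a cellular automaton with finite state set $Q\supseteq\Sigma$, accepting states $Q_{accept}\subseteq Q$, neighborhood $\{-1,0,1\}$, transition function $\delta:Q^3\to Q$ and an input transition function $\delta_{input}$ for the first cell. On input $w=w_1\cdots w_n$ it uses cells $1,\dots,n$; cells outside are permanently in a state $\sharp$, cells not yet reached by information are in a quiescent state $\lambda$. The letter $w_i$ is given to cell 1 at time $i$ (state of cell 1 at time $i\le n$ computed by $\delta_{input}$ from $w_i$ and the previous neighbourhood states); other updates are $\langle c,t\rangle=\delta(\langle c-1,t-1\rangle,\langle c,t-1\rangle,\langle c+1,t-1\rangle)$. The array accepts $w$ in real time iff $\langle 1,n\rangle\in Q_{accept}$; $\mathtt{RealTime_{IA}}$ is the class of languages so accepted. *)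

theory Defs
  imports Main
begin

text \<open>The left neighbour of cell 1 is always the border state sharp, so the
  input transition takes the current letter and the (left, own, right)
  neighbourhood states of the previous time step.\<close>

record ('a, 'q) ia =
  ia_delta :: "'q \<Rightarrow> 'q \<Rightarrow> 'q \<Rightarrow> 'q"
  ia_delta_input :: "'a \<Rightarrow> 'q \<Rightarrow> 'q \<Rightarrow> 'q \<Rightarrow> 'q"
  ia_sharp :: 'q
  ia_lambda :: 'q
  ia_accept :: "'q set"

definition is_ia :: "('a, 'q) ia \<Rightarrow> bool" where
  "is_ia A \<longleftrightarrow> ia_delta A (ia_lambda A) (ia_lambda A) (ia_lambda A) = ia_lambda A"

text \<open>Letter w_i (= w ! (i-1)) is read by cell 1 at time i.\<close>
primrec ia_conf :: "('a, 'q) ia \<Rightarrow> 'a list \<Rightarrow> nat \<Rightarrow> nat \<Rightarrow> 'q" where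
  "ia_conf A w 0 = (\<lambda>c. if 1 \<le> c \<and> c \<le> length w then ia_lambda A else ia_sharp A)"
| "ia_conf A w (Suc t) = (\<lambda>c.
     if c = 0 \<or> length w < c then ia_sharp A
     else if c = 1 \<and> Suc t \<le> length w then
       ia_delta_input A (w ! t) (ia_conf A w t 0) (ia_conf A w t 1) (ia_conf A w t 2)
     else ia_delta A (ia_conf A w t (c - 1)) (ia_conf A w t c) (ia_conf A w t (c + 1)))"

definition ia_state :: "('a, 'q) ia \<Rightarrow> 'a list \<Rightarrow> nat \<Rightarrow> nat \<Rightarrow> 'q" where
  "ia_state A w c t = ia_conf A w t c"

definition ia_accepts_rt :: "('a, 'q) ia \<Rightarrow> 'a list \<Rightarrow> bool" where
  "ia_accepts_rt A w \<longleftrightarrow> ia_state A w 1 (length w) \<in> ia_accept A"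

datatype var = VX | VY
datatype unpred = UMin | UMax

text \<open>Hypotheses of a Horn clause; relation symbols are natural numbers.
  HQ s a:           Q_s(x-a) and x = y
  HU U v pos a:     U(v-a) if pos, else not U(v-a), with v in {x,y}
  HRxy S a b:       S(x-a, y-b)
  HRyx S b a:       S(y-b, x-a)\<close>
datatype 'a hyp =
    HQ 'a nat
  | HU unpred var bool nat
  | HRxy nat nat nat
  | HRyx nat nat nat

text \<open>A clause: list of hypotheses and head (Some S = S(x,y), None = bottom).
  A formula is the list of clauses of psi; its relation symbols
  (the finite set R) are those occurring in it.\<close>
type_synonym 'a clause = "'a hyp list \<times> nat option"
type_synonym 'a pdio_formula = "'a clause list"

definition wpred :: "nat \<Rightarrow> nat" where
  "wpred i = max (i - 1) 1"

text \<open>x - k = pred^k(x)\<close>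
definition wpredk :: "nat \<Rightarrow> nat \<Rightarrow> nat" where
  "wpredk k x = (wpred ^^ k) x"

definition wQ :: "'a list \<Rightarrow> 'a \<Rightarrow> nat \<Rightarrow> bool" where
  "wQ w s i \<longleftrightarrow> w ! (i - 1) = s"

definition wU :: "'a list \<Rightarrow> unpred \<Rightarrow> nat \<Rightarrow> bool" where
  "wU w U i \<longleftrightarrow> (case U of UMin \<Rightarrow> i = 1 | UMax \<Rightarrow> i = length w)"

fun hyp_sem :: "'a list \<Rightarrow> (nat \<Rightarrow> nat \<Rightarrow> nat \<Rightarrow> bool) \<Rightarrow> nat \<Rightarrow> nat \<Rightarrow> 'a hyp \<Rightarrow> bool" where
  "hyp_sem w I x y (HQ s a) \<longleftrightarrow> wQ w s (wpredk a x) \<and> x = y"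
| "hyp_sem w I x y (HU U v pos a) \<longleftrightarrow>
     (wU w U (wpredk a (case v of VX \<Rightarrow> x | VY \<Rightarrow> y)) \<longleftrightarrow> pos)"
| "hyp_sem w I x y (HRxy S a b) \<longleftrightarrow> I S (wpredk a x) (wpredk b y)"
| "hyp_sem w I x y (HRyx S b a) \<longleftrightarrow> I S (wpredk b y) (wpredk a x)"

definition clause_sem :: "'a list \<Rightarrow> (nat \<Rightarrow> nat \<Rightarrow> nat \<Rightarrow> bool) \<Rightarrow> nat \<Rightarrow> nat \<Rightarrow> 'a clause \<Rightarrow> bool" where
  "clause_sem w I x y C \<longleftrightarrow>
     ((\<forall>h \<in> set (fst C). hyp_sem w I x y h) \<longrightarrow>
      (case snd C of None \<Rightarrow> False | Some S \<Rightarrow> I S x y))"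

definition models :: "'a list \<Rightarrow> 'a pdio_formula \<Rightarrow> bool" where
  "models w \<Phi> \<longleftrightarrow>
     (\<exists>I :: nat \<Rightarrow> nat \<Rightarrow> nat \<Rightarrow> bool.
        \<forall>x \<in> {1..length w}. \<forall>y \<in> {1..length w}. \<forall>C \<in> set \<Phi>. clause_sem w I x y C)"

end

theory Submission
  imports Defs
begin

lemma wpred_eq: "wpred x = (if x \<le> 1 then 1 else x - 1)"
  by (simp add: wpred_def)

lemma wpredk_0[simp]: "wpredk 0 x = x" by (simp add: wpredk_def)
lemma wpredk_1[simp]: "wpredk (Suc 0) x = wpred x" by (simp add: wpredk_def)
lemma wpredk_2[simp]: "wpredk 2 x = wpred (wpred x)" by (simp add: wpredk_def numeral_2_eq_2)

definition RR :: "('q \<Rightarrow> nat) \<Rightarrow> 'q \<Rightarrow> nat" where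
  "RR f q = Suc (f q)"

definition clauses :: "('a::finite, 'q::finite) ia \<Rightarrow> ('q \<Rightarrow> nat) \<Rightarrow> 'a clause set" where
  "clauses A f =
    {([HU UMin VX True 0, HU UMin VY False 0], Some 0)}
  \<union> {([HU UMin VX False 0, HRxy 0 1 1], Some 0)}
  \<union> range (\<lambda>s. ([HU UMin VX True 0, HQ s 0, HU UMax VY False 0],
        Some (RR f (ia_delta_input A s (ia_sharp A) (ia_lambda A) (ia_lambda A)))))
  \<union> range (\<lambda>s. ([HU UMin VX True 0, HQ s 0, HU UMax VY True 0],
        Some (RR f (ia_delta_input A s (ia_sharp A) (ia_lambda A) (ia_sharp A)))))
  \<union> {([HU UMin VX True 0, HU UMin VY False 0, HU UMax VY False 0],
        Some (RR f (ia_delta A (ia_lambda A) (ia_lambda A) (ia_lambda A))))}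
  \<union> {([HU UMin VX True 0, HU UMin VY False 0, HU UMax VY True 0],
        Some (RR f (ia_delta A (ia_lambda A) (ia_lambda A) (ia_sharp A))))}
  \<union> range (\<lambda>(s, q2, q3). ([HQ s 0, HU UMin VX False 0, HRxy (RR f q2) 1 1, HRxy (RR f q3) 1 0],
        Some (RR f (ia_delta_input A s (ia_sharp A) q2 q3))))
  \<union> range (\<lambda>(q1, q2, q3). ([HU UMin VX False 0, HRxy 0 0 0, HRxy (RR f q1) 1 2,
          HRxy (RR f q2) 1 1, HRxy (RR f q3) 1 0],
        Some (RR f (ia_delta A q1 q2 q3))))
  \<union> (\<lambda>q. ([HU UMax VX True 0, HU UMax VY True 0, HRxy (RR f q) 0 0], None)) ` (- ia_accept A)"

lemma finite_clauses: "finite (clauses A f)"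
  unfolding clauses_def by simp

lemma conf0: "ia_conf A w t 0 = ia_sharp A"
  by (cases t) auto

lemma conf_zero: "ia_conf A w 0 c = (if 1 \<le> c \<and> c \<le> length w then ia_lambda A else ia_sharp A)"
  by simp

lemma conf_diag: "Suc t \<le> length w \<Longrightarrow> ia_conf A w (Suc t) (Suc 0) =
   ia_delta_input A (w ! t) (ia_sharp A) (ia_conf A w t (Suc 0)) (ia_conf A w t (Suc (Suc 0)))"
  by (cases w) (auto simp: conf0 numeral_2_eq_2)

lemma conf_gen: "2 \<le> c \<Longrightarrow> c \<le> length w \<Longrightarrow> ia_conf A w (Suc t) c =
   ia_delta A (ia_conf A w t (c - 1)) (ia_conf A w t c) (ia_conf A w t (c + 1))"
  by simp

lemma conf11: "Suc 0 \<le> length w \<Longrightarrow> ia_conf A w (Suc 0) (Suc 0) = ia_delta_input A (w ! 0) (ia_sharp A)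
   (ia_lambda A) (if 2 \<le> length w then ia_lambda A else ia_sharp A)"
  by (cases w) auto

lemma conf1c: "2 \<le> c \<Longrightarrow> c \<le> length w \<Longrightarrow> ia_conf A w (Suc 0) c = ia_delta A
   (ia_lambda A) (ia_lambda A) (if c + 1 \<le> length w then ia_lambda A else ia_sharp A)"
  by auto

declare ia_conf.simps(2)[simp del]

definition Itrue :: "('a, 'q) ia \<Rightarrow> 'a list \<Rightarrow> ('q \<Rightarrow> nat) \<Rightarrow> nat \<Rightarrow> nat \<Rightarrow> nat \<Rightarrow> bool" where
  "Itrue A w f S x y = (if S = 0 then x < y else x \<le> y \<and> S = RR f (ia_conf A w x (y - x + 1)))"

lemma RR_inj: "inj f \<Longrightarrow> (RR f a = RR f b) = (a = b)"
  by (simp add: RR_def inj_eq)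

lemma RR_nz[simp]: "RR f q \<noteq> 0" by (simp add: RR_def)

lemma sound:
  assumes inj: "inj f" and acc: "ia_accepts_rt A w"
    and x: "x \<in> {1..length w}" and y: "y \<in> {1..length w}"
    and C: "C \<in> clauses A f"
  shows "clause_sem w (Itrue A w f) x y C"
  using C unfolding clauses_def
proof (elim UnE imageE singletonE)
  show "C = ([HU UMin VX True 0, HU UMin VY False 0], Some 0) \<Longrightarrow> clause_sem w (Itrue A w f) x y C"
    using x y by (auto simp: clause_sem_def wU_def Itrue_def)
next
  show "C = ([HU UMin VX False 0, HRxy 0 1 1], Some 0) \<Longrightarrow> clause_sem w (Itrue A w f) x y C"
    using x y by (auto simp: clause_sem_def wU_def Itrue_def wpred_eq split: if_splits)
next
  fix s assume "C = ([HU UMin VX True 0, HQ s 0, HU UMax VY False 0],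
        Some (RR f (ia_delta_input A s (ia_sharp A) (ia_lambda A) (ia_lambda A))))"
  then show "clause_sem w (Itrue A w f) x y C"
    using x y by (auto simp: clause_sem_def wU_def wQ_def Itrue_def conf11 conf1c RR_inj[OF inj])
next
  fix s assume "C = ([HU UMin VX True 0, HQ s 0, HU UMax VY True 0],
        Some (RR f (ia_delta_input A s (ia_sharp A) (ia_lambda A) (ia_sharp A))))"
  then show "clause_sem w (Itrue A w f) x y C"
    using x y by (auto simp: clause_sem_def wU_def wQ_def Itrue_def conf11 conf1c RR_inj[OF inj])
next
  assume "C = ([HU UMin VX True 0, HU UMin VY False 0, HU UMax VY False 0],
        Some (RR f (ia_delta A (ia_lambda A) (ia_lambda A) (ia_lambda A))))"
  then show "clause_sem w (Itrue A w f) x y C"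
    using x y by (auto simp: clause_sem_def wU_def wQ_def Itrue_def conf11 conf1c RR_inj[OF inj])
next
  assume "C = ([HU UMin VX True 0, HU UMin VY False 0, HU UMax VY True 0],
        Some (RR f (ia_delta A (ia_lambda A) (ia_lambda A) (ia_sharp A))))"
  then show "clause_sem w (Itrue A w f) x y C"
    using x y by (auto simp: clause_sem_def wU_def wQ_def Itrue_def conf11 conf1c RR_inj[OF inj])
next
  fix p assume "C = (case p of (s, q2, q3) \<Rightarrow> ([HQ s 0, HU UMin VX False 0, HRxy (RR f q2) 1 1, HRxy (RR f q3) 1 0],
        Some (RR f (ia_delta_input A s (ia_sharp A) q2 q3))))"
  then obtain s q2 q3 where C: "C = ([HQ s 0, HU UMin VX False 0, HRxy (RR f q2) 1 1, HRxy (RR f q3) 1 0],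
        Some (RR f (ia_delta_input A s (ia_sharp A) q2 q3)))" by (cases p) auto
  show "clause_sem w (Itrue A w f) x y C"
  proof (cases "x = y \<and> x \<noteq> 1")
    case True
    then obtain t where t: "x = Suc t" "y = Suc t" "t \<ge> 1" using x by (cases x) auto
    have p: "wpred (Suc t) = t" using t by (simp add: wpred_eq)
    show ?thesis using x y t
      by (auto simp: C clause_sem_def wU_def wQ_def Itrue_def RR_inj[OF inj] p conf_diag)
  qed (auto simp: C clause_sem_def wU_def wQ_def)
next
  fix p assume "C = (case p of (q1, q2, q3) \<Rightarrow> ([HU UMin VX False 0, HRxy 0 0 0, HRxy (RR f q1) 1 2,
          HRxy (RR f q2) 1 1, HRxy (RR f q3) 1 0],
        Some (RR f (ia_delta A q1 q2 q3))))"
  then obtain q1 q2 q3 where C: "C = ([HU UMin VX False 0, HRxy 0 0 0, HRxy (RR f q1) 1 2,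
          HRxy (RR f q2) 1 1, HRxy (RR f q3) 1 0],
        Some (RR f (ia_delta A q1 q2 q3)))" by (cases p) auto
  show "clause_sem w (Itrue A w f) x y C"
  proof (cases "x < y \<and> x \<noteq> 1")
    case True
    then obtain t d where t: "x = Suc t" "t \<ge> 1" "y = Suc (Suc (t + d))" using x
      by (cases x) (auto dest!: less_imp_Suc_add)
    have p: "wpred (Suc t) = t" "wpred (Suc (Suc (t + d))) = Suc (t + d)" "wpred (Suc (t + d)) = t + d"
      using t by (auto simp: wpred_eq)
    have e: "ia_conf A w (Suc t) (Suc (Suc d)) = ia_delta A (ia_conf A w t (Suc d))
       (ia_conf A w t (Suc (Suc d))) (ia_conf A w t (Suc (Suc (Suc d))))"
      using conf_gen[of "Suc (Suc d)" w A t] t y by auto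
    have f: "Suc (Suc (t + d)) - Suc t + 1 = Suc (Suc d)" "t + d - t + 1 = Suc d"
      "Suc (t + d) - t + 1 = Suc (Suc d)" "Suc (Suc (t + d)) - t + 1 = Suc (Suc (Suc d))" by auto
    show ?thesis using x y t
      unfolding C clause_sem_def
      by (simp only: list.set ball_simps hyp_sem.simps wpredk_0 wpredk_1 wpredk_2 p Itrue_def f e
          fst_conv snd_conv option.case RR_inj[OF inj] RR_nz if_False) (auto simp: p)
  qed (auto simp: C clause_sem_def wU_def Itrue_def)
next
  fix q assume "q \<in> - ia_accept A" "C = ([HU UMax VX True 0, HU UMax VY True 0, HRxy (RR f q) 0 0], None)"
  then show "clause_sem w (Itrue A w f) x y C"
    using x y acc by (auto simp: clause_sem_def wU_def Itrue_def RR_inj[OF inj] ia_accepts_rt_def ia_state_def)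
qed

lemma useC:
  assumes H: "\<forall>x\<in>{1..length w}. \<forall>y\<in>{1..length w}. \<forall>C\<in>CS. clause_sem w I x y C"
    and "(hs, Some S) \<in> CS" "1 \<le> x" "x \<le> length w" "1 \<le> y" "y \<le> length w"
    and "\<forall>h\<in>set hs. hyp_sem w I x y h"
  shows "I S x y"
  using assms unfolding clause_sem_def by fastforce

lemma useN:
  assumes H: "\<forall>x\<in>{1..length w}. \<forall>y\<in>{1..length w}. \<forall>C\<in>CS. clause_sem w I x y C"
    and "(hs, None) \<in> CS" "1 \<le> x" "x \<le> length w" "1 \<le> y" "y \<le> length w"
    and "\<forall>h\<in>set hs. hyp_sem w I x y h"
  shows False
  using assms unfolding clause_sem_def by fastforce

lemma mem_diag: "([HQ s 0, HU UMin VX False 0, HRxy (RR f q2) 1 1, HRxy (RR f q3) 1 0],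
        Some (RR f (ia_delta_input A s (ia_sharp A) q2 q3))) \<in> clauses A f"
  unfolding clauses_def
  by (intro UnI1 UnI2 rev_image_eqI[of "(s, q2, q3)"]) auto

lemma mem_gen: "([HU UMin VX False 0, HRxy 0 0 0, HRxy (RR f q1) 1 2,
          HRxy (RR f q2) 1 1, HRxy (RR f q3) 1 0],
        Some (RR f (ia_delta A q1 q2 q3))) \<in> clauses A f"
  unfolding clauses_def
  by (intro UnI1 UnI2 rev_image_eqI[of "(q1, q2, q3)"]) auto

lemma LT:
  assumes H: "\<forall>x\<in>{1..length w}. \<forall>y\<in>{1..length w}. \<forall>C\<in>clauses A f. clause_sem w I x y C"
  shows "1 \<le> x \<Longrightarrow> x < y \<Longrightarrow> y \<le> length w \<Longrightarrow> I 0 x y"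
proof (induction x arbitrary: y)
  case 0 thus ?case by simp
next
  case (Suc x)
  show ?case
  proof (cases "x = 0")
    case True
    show ?thesis
      by (rule useC[OF H, of "[HU UMin VX True 0, HU UMin VY False 0]"])
        (use Suc.prems True in \<open>auto simp: clauses_def wU_def\<close>)
  next
    case False
    have i: "I 0 x (y - 1)" using Suc.IH[of "y - 1"] Suc.prems False by auto
    have p: "wpred (Suc x) = x" "wpred y = y - 1" using False Suc.prems by (auto simp: wpred_eq)
    show ?thesis
      by (rule useC[OF H, of "[HU UMin VX False 0, HRxy 0 1 1]"])
        (use Suc.prems False i p in \<open>auto simp: clauses_def wU_def\<close>)
  qed
qed

lemma complete_states:
  assumes H: "\<forall>x\<in>{1..length w}. \<forall>y\<in>{1..length w}. \<forall>C\<in>clauses A f. clause_sem w I x y C"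
  shows "1 \<le> t \<Longrightarrow> t \<le> y \<Longrightarrow> y \<le> length w \<Longrightarrow> I (RR f (ia_conf A w t (y - t + 1))) t y"
proof (induction t arbitrary: y)
  case 0 thus ?case by simp
next
  case (Suc t)
  show ?case
  proof (cases "t = 0")
    case t0: True
    show ?thesis
    proof (cases "y = 1")
      case True
      show ?thesis
      proof (cases "length w = 1")
        case True
        show ?thesis
          by (rule useC[OF H, of "[HU UMin VX True 0, HQ (w ! 0) 0, HU UMax VY True 0]"])
            (use Suc.prems True t0 \<open>y = 1\<close> in \<open>auto simp: clauses_def wU_def wQ_def conf11\<close>)
      next
        case False
        show ?thesis
          by (rule useC[OF H, of "[HU UMin VX True 0, HQ (w ! 0) 0, HU UMax VY False 0]"])
            (use Suc.prems False t0 \<open>y = 1\<close> in \<open>auto simp: clauses_def wU_def wQ_def conf11\<close>)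
      qed
    next
      case y1: False
      show ?thesis
      proof (cases "y = length w")
        case True
        show ?thesis
          by (rule useC[OF H, of "[HU UMin VX True 0, HU UMin VY False 0, HU UMax VY True 0]"])
            (use Suc.prems True t0 y1 in \<open>auto simp: clauses_def wU_def conf1c\<close>)
      next
        case False
        show ?thesis
          by (rule useC[OF H, of "[HU UMin VX True 0, HU UMin VY False 0, HU UMax VY False 0]"])
            (use Suc.prems False t0 y1 in \<open>auto simp: clauses_def wU_def conf1c\<close>)
      qed
    qed
  next
    case tn0: False
    have p: "wpred (Suc t) = t" using tn0 by (auto simp: wpred_eq)
    show ?thesis
    proof (cases "y = Suc t")
      case True
      have i2: "I (RR f (ia_conf A w t (Suc 0))) t t" using Suc.IH[of t] Suc.prems tn0 by auto
      have i3: "I (RR f (ia_conf A w t (Suc (Suc 0)))) t (Suc t)"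
        using Suc.IH[of "Suc t"] Suc.prems tn0 True by (auto simp: Suc_diff_le)
      have e: "ia_conf A w (Suc t) (y - Suc t + 1) = ia_delta_input A (w ! t) (ia_sharp A)
          (ia_conf A w t (Suc 0)) (ia_conf A w t (Suc (Suc 0)))"
        using True Suc.prems by (simp add: conf_diag)
      show ?thesis unfolding e
        by (rule useC[OF H, of "[HQ (w ! t) 0, HU UMin VX False 0,
              HRxy (RR f (ia_conf A w t (Suc 0))) 1 1, HRxy (RR f (ia_conf A w t (Suc (Suc 0)))) 1 0]"])
          (use Suc.prems True tn0 i2 i3 p mem_diag in \<open>auto simp: wU_def wQ_def\<close>)
    next
      case False
      then obtain d where y: "y = Suc (Suc (t + d))" using Suc.prems
        by (auto dest!: le_imp_less_or_eq less_imp_Suc_add)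
      have py: "wpred (Suc (Suc (t + d))) = Suc (t + d)" "wpred (Suc (t + d)) = t + d"
        using tn0 by (auto simp: wpred_eq)
      have lt: "I 0 (Suc t) y" using LT[OF H, of "Suc t" y] Suc.prems y by auto
      have i1: "I (RR f (ia_conf A w t (Suc d))) t (t + d)"
        using Suc.IH[of "t + d"] Suc.prems tn0 y by auto
      have i2: "I (RR f (ia_conf A w t (Suc (Suc d)))) t (Suc (t + d))"
        using Suc.IH[of "Suc (t + d)"] Suc.prems tn0 y by (auto simp: Suc_diff_le)
      have i3: "I (RR f (ia_conf A w t (Suc (Suc (Suc d))))) t y"
        using Suc.IH[of y] Suc.prems tn0 y by (auto simp: Suc_diff_le)
      have e: "ia_conf A w (Suc t) (y - Suc t + 1) = ia_delta A (ia_conf A w t (Suc d))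
         (ia_conf A w t (Suc (Suc d))) (ia_conf A w t (Suc (Suc (Suc d))))"
        using conf_gen[of "Suc (Suc d)" w A t] Suc.prems y by auto
      show ?thesis unfolding e
        by (rule useC[OF H, of "[HU UMin VX False 0, HRxy 0 0 0, HRxy (RR f (ia_conf A w t (Suc d))) 1 2,
          HRxy (RR f (ia_conf A w t (Suc (Suc d)))) 1 1, HRxy (RR f (ia_conf A w t (Suc (Suc (Suc d))))) 1 0]"])
          (use Suc.prems y tn0 i1 i2 i3 p py lt mem_gen in \<open>auto simp: wU_def\<close>)
    qed
  qed
qed

theorem lemma5:
  fixes A :: "('a::finite, 'q::finite) ia"
  assumes "is_ia A"
  shows "\<exists>\<Phi> :: 'a pdio_formula. \<forall>w :: 'a list. w \<noteq> [] \<longrightarrow>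
           (ia_accepts_rt A w \<longleftrightarrow> models w \<Phi>)"
proof -
  obtain f :: "'q \<Rightarrow> nat" and m where "f ` UNIV = {i. i < m}" "inj_on f UNIV"
    using finite_imp_inj_to_nat_seg[of "UNIV :: 'q set"] by auto
  then have inj: "inj f" by simp
  obtain Phi where Phi: "set Phi = clauses A f" using finite_list[OF finite_clauses] by blast
  show ?thesis
  proof (intro exI allI impI)
    fix w :: "'a list" assume w: "w \<noteq> []"
    show "ia_accepts_rt A w \<longleftrightarrow> models w Phi"
    proof
      assume acc: "ia_accepts_rt A w"
      show "models w Phi" unfolding models_def Phi
        using sound[OF inj acc] by blast
    next
      assume "models w Phi"
      then obtain I where H: "\<forall>x\<in>{1..length w}. \<forall>y\<in>{1..length w}. \<forall>C\<in>clauses A f. clause_sem w I x y C"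
        unfolding models_def Phi by blast
      have n: "1 \<le> length w" using w by (cases w) auto
      have st: "I (RR f (ia_conf A w (length w) 1)) (length w) (length w)"
        using complete_states[OF H, of "length w" "length w"] n by simp
      show "ia_accepts_rt A w"
      proof (rule ccontr)
        assume na: "\<not> ia_accepts_rt A w"
        show False
          by (rule useN[OF H, of "[HU UMax VX True 0, HU UMax VY True 0,
              HRxy (RR f (ia_conf A w (length w) 1)) 0 0]" "length w" "length w"])
            (use na n st in \<open>auto simp: clauses_def wU_def ia_accepts_rt_def ia_state_def\<close>)
      qed
    qed
  qed
qed

end
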